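(* The point $p=(v_{0,0},v_{1,0},v_{2,0},\ldots)$ is a fixed point of $T$, and it is the only periodic point of $(X,T)$.
   Context: Paths and cycles: a graph is $G=(V,E)$ with $V$ finite and $E\subset V\times V$. A path is a finite sequence of vertices $(u_0,\dots,u_L)$ with $(u_j,u_{j+1})\in E$; its length is $|\cdot|=L$; a cycle is a path with $u_0=u_L$. For paths where one ends where the next starts, $+$ denotes concatenation and $a\,c$ means the cycle $c$ traversed $a$ times. Construction: $G_0=(V_0,E_0)$ with $V_0=\{v_{0,0}\}$, $E_0=\{e_{0,0}\}$, $e_{0,0}=(v_{0,0},v_{0,0})$. For $n\geq1$, $G_n=(V_n,E_n)$ consists of a vertex $v_{n,0}$, the loop $e_{n,0}=(v_{n,0},v_{n,0})$, and $n$ cycles $c_{n,1},\dots,c_{n,n}$, each starting and ending at $v_{n,0}$, whose vertices other than $v_{n,0}$ are pairwise distinct (within each cycle and across cycles); $V_n$ is the set of all these vertices and $E_n$ consists of $e_{n,0}$ and the edges of the cycles. The maps $\varphi_n\colon V_{n+1}\to V_n$ and the lengths of the cycles $c_{n+1,i}$ are defined together: $\varphi_n(v_{n+1,0})=v_{n,0}$, and for each $i$ a path $P_{n,i}$ in $G_n$ from $v_{n,0}$ to $v_{n,0}$ is given; $c_{n+1,i}$ has length $|P_{n,i}|$ and $\varphi_n$ maps its $j$-th vertex to the $j$-th vertex of $P_{n,i}$ (written $\varphi_n(c_{n+1,i})=P_{n,i}$). The paths are: $P_{0,1}=10\,e_{0,0}$; for $n\geq1$: $P_{n,i}=e_{n,0}+2c_{n,i}+2c_{n,i+1}+\dots+2c_{n,n}+e_{n,0}$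 for $2\leq i\leq n$; $P_{n,n+1}=(n+2)^2\big(\sum_{i=1}^n|c_{n,i}|\big)\,e_{n,0}$; and $P_{n,1}=(1\,e_{n,0}+2c_{n,1})+(2\,e_{n,0}+2c_{n,1})+\dots+(k_n\,e_{n,0}+2c_{n,1})+e_{n,0}+2c_{n,2}+\dots+2c_{n,n}+e_{n,0}$, where $k_n=2\big(1+\sum_{i=1}^n|c_{n,i}|\big)$. Let $X=\{x\in\prod_{n\geq0}V_n:\varphi_n(x_{n+1})=x_n\ \forall n\}$ with metric $d(x,y)=2^{-\min\{i:x_i\neq y_i\}}$ ($d(x,x)=0$); $X$ is a compact zero-dimensional metric space, and $T\colon X\to X$ defined by $T(x)=y$ iff $(x_n,y_n)\in E_n$ for all $n$ is a well-defined homeomorphism. Write $x_n$ for the $n$-th coordinate of $x$. *)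

theory Defs
  imports Main
begin

text \<open>
Vertices of G_n are pairs of naturals: (0,0) is v_{n,0}; (i,j) with 1 <= i <= n and
1 <= j < |c_{n,i}| is the j-th vertex of the cycle c_{n,i}.
A cycle based at (0,0) is represented by the list of its vertices omitting the final
(repeated) vertex (0,0); concatenation of such cycles is list append and the length of
the cycle equals the length of the list.
\<close>

type_synonym vert = "nat \<times> nat"

definition base :: vert where "base = (0, 0)"

definition loopc :: "vert list" where "loopc = [base]"

text \<open>c_{n,i} given the list ls of cycle lengths of G_n (index i is 1-based).\<close>
definition cyc :: "nat list \<Rightarrow> nat \<Rightarrow> vert list" where
  "cyc ls i = base # map (\<lambda>j. (i, j)) [1..<ls ! (i - 1)]"

definition rep :: "nat \<Rightarrow> vert list \<Rightarrow> vert list" where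
  "rep a c = concat (replicate a c)"

definition mkpaths :: "nat \<Rightarrow> nat list \<Rightarrow> vert list list" where
  "mkpaths n ls =
    (if n = 0 then [rep 10 loopc]
     else
       (let S = sum_list ls; k = 2 * (1 + S);
            tailp = (\<lambda>i. concat (map (\<lambda>m. rep 2 (cyc ls m)) [i..<n + 1]));
            P1 = concat (map (\<lambda>m. rep m loopc @ rep 2 (cyc ls 1)) [1..<k + 1])
                 @ loopc @ tailp 2 @ loopc;
            Pi = (\<lambda>i. loopc @ tailp i @ loopc);
            Plast = rep ((n + 2)^2 * S) loopc
        in [P1] @ map Pi [2..<n + 1] @ [Plast]))"

text \<open>lens n = [|c_{n,1}|, ..., |c_{n,n}|].\<close>
primrec lens :: "nat \<Rightarrow> nat list" where
  "lens 0 = []"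
| "lens (Suc n) = map length (mkpaths n (lens n))"

definition paths :: "nat \<Rightarrow> vert list list" where
  "paths n = mkpaths n (lens n)"

definition Vn :: "nat \<Rightarrow> vert set" where
  "Vn n = {base} \<union> {(i, j). 1 \<le> i \<and> i \<le> n \<and> 1 \<le> j \<and> j < lens n ! (i - 1)}"

definition path_edges :: "vert list \<Rightarrow> (vert \<times> vert) set" where
  "path_edges p = {(p ! j, p ! Suc j) | j. Suc j < length p}"

definition En :: "nat \<Rightarrow> (vert \<times> vert) set" where
  "En n = {(base, base)} \<union> (\<Union>i\<in>{1..n}. path_edges (cyc (lens n) i @ [base]))"

text \<open>phi_n : V_{n+1} \<rightarrow> V_n, mapping the j-th vertex of c_{n+1,i} to the j-th vertex of P_{n,i}.\<close>
definition phi :: "nat \<Rightarrow> vert \<Rightarrow> vert" where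
  "phi n v = (if v = base then base else paths n ! (fst v - 1) ! snd v)"

definition Xsp :: "(nat \<Rightarrow> vert) set" where
  "Xsp = {x. (\<forall>n. x n \<in> Vn n) \<and> (\<forall>n. phi n (x (Suc n)) = x n)}"

definition Tmap :: "(nat \<Rightarrow> vert) \<Rightarrow> (nat \<Rightarrow> vert)" where
  "Tmap x = (THE y. y \<in> Xsp \<and> (\<forall>n. (x n, y n) \<in> En n))"

definition pt :: "nat \<Rightarrow> vert" where "pt = (\<lambda>n. base)"

definition periodic_point :: "(nat \<Rightarrow> vert) \<Rightarrow> bool" where
  "periodic_point x \<longleftrightarrow> x \<in> Xsp \<and> (\<exists>k>0. (Tmap ^^ k) x = x)"

end

theory Submission
  imports Defs
begin

lemma pe_succ: "path_edges p \<subseteq> E \<longleftrightarrow> successively (\<lambda>a b. (a,b) \<in> E) p"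
  unfolding path_edges_def successively_conv_nth by blast

lemma len_mkpaths: "length (mkpaths n ls) = Suc n"
  by (simp add: mkpaths_def Let_def; arith)

lemma len_lens: "length (lens n) = n"
  by (induct n) (auto simp: len_mkpaths)

lemma len_paths: "length (paths n) = Suc n"
  by (simp add: paths_def len_mkpaths)

lemma lens_Suc_nth: "k \<le> n \<Longrightarrow> lens (Suc n) ! k = length (paths n ! k)"
  by (simp add: paths_def len_mkpaths)

lemma cyc_edges:
  assumes "i \<ge> 1"
  shows "(v,w) \<in> path_edges (cyc ls i @ [base]) \<longleftrightarrow>
    (\<exists>j. j < max 1 (ls!(i-1)) \<and> v = (if j = 0 then base else (i,j)) \<and>
         w = (if Suc j < ls!(i-1) then (i, Suc j) else base))"
proof -
  let ?L = "ls!(i-1)"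
  let ?p = "cyc ls i @ [base]"
  have len: "length ?p = Suc (max 1 ?L)" by (simp add: cyc_def)
  have nth: "\<And>j. j \<le> max 1 ?L \<Longrightarrow> ?p ! j = (if j = 0 \<or> j \<ge> ?L then base else (i,j))"
    by (auto simp: cyc_def nth_append nth_Cons split: nat.splits)
  show ?thesis
  proof
    assume "(v,w) \<in> path_edges ?p"
    then obtain j where j: "Suc j < length ?p" "v = ?p ! j" "w = ?p ! Suc j"
      unfolding path_edges_def by blast
    then show "\<exists>j. j < max 1 ?L \<and> v = (if j = 0 then base else (i,j)) \<and>
         w = (if Suc j < ?L then (i, Suc j) else base)"
      using nth[of j] nth[of "Suc j"] len by (intro exI[of _ j]) auto
  next
    assume "\<exists>j. j < max 1 ?L \<and> v = (if j = 0 then base else (i,j)) \<and>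
         w = (if Suc j < ?L then (i, Suc j) else base)"
    then obtain j where j: "j < max 1 ?L" "v = (if j = 0 then base else (i,j))"
         "w = (if Suc j < ?L then (i, Suc j) else base)" by blast
    have "v = ?p ! j" "w = ?p ! Suc j" using nth[of j] nth[of "Suc j"] j by auto
    then show "(v,w) \<in> path_edges ?p" unfolding path_edges_def using j len by auto
  qed
qed

definition nxt :: "nat \<Rightarrow> vert \<Rightarrow> vert" where
  "nxt n v = (if Suc (snd v) < lens n ! (fst v - 1) then (fst v, Suc (snd v)) else base)"

lemma En_iff: "(v,w) \<in> En n \<longleftrightarrow> (v = base \<and> w = base) \<or>
   (\<exists>i j. 1 \<le> i \<and> i \<le> n \<and> j < max 1 (lens n!(i-1)) \<and> v = (if j = 0 then base else (i,j)) \<and>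
         w = (if Suc j < lens n!(i-1) then (i, Suc j) else base))"
proof -
  have "(v,w) \<in> En n \<longleftrightarrow> (v = base \<and> w = base) \<or>
    (\<exists>i. 1 \<le> i \<and> i \<le> n \<and> (v,w) \<in> path_edges (cyc (lens n) i @ [base]))"
    unfolding En_def by auto
  also have "\<dots> \<longleftrightarrow> (v = base \<and> w = base) \<or>
   (\<exists>i. 1 \<le> i \<and> i \<le> n \<and> (\<exists>j. j < max 1 (lens n!(i-1)) \<and> v = (if j = 0 then base else (i,j)) \<and>
         w = (if Suc j < lens n!(i-1) then (i, Suc j) else base)))"
    apply (intro disj_cong refl ex_cong1 conj_cong)
    by (simp add: cyc_edges)
  finally show ?thesis by blast
qed

lemma E1: assumes "(v,w) \<in> En n" "v \<noteq> base"
  shows "\<exists>i j. v = (i,j) \<and> 1 \<le> i \<and> i \<le> n \<and> 1 \<le> j \<and> j < lens n!(i-1) \<and> w = nxt n v"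
proof -
  obtain i j where ij: "1 \<le> i" "i \<le> n" "j < max 1 (lens n!(i-1))" "v = (if j = 0 then base else (i,j))"
         "w = (if Suc j < lens n!(i-1) then (i, Suc j) else base)"
    using assms unfolding En_iff by blast
  have "j \<noteq> 0" using ij(4) assms(2) by (auto split: if_splits)
  then show ?thesis using ij by (intro exI[of _ i] exI[of _ j]) (auto simp: nxt_def)
qed

lemma E2: assumes "v \<in> Vn n" "v \<noteq> base" shows "(v, nxt n v) \<in> En n"
proof -
  obtain i j where v: "v = (i,j)" "1 \<le> i" "i \<le> n" "1 \<le> j" "j < lens n!(i-1)"
    using assms unfolding Vn_def by auto
  show ?thesis unfolding En_iff nxt_def
    by (rule disjI2, rule exI[of _ i], rule exI[of _ j]) (use v in auto)
qed

lemma E3: assumes "(v,w) \<in> En n" shows "w \<in> Vn n"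
  using assms unfolding En_iff Vn_def by (auto split: if_splits)

lemma E4: assumes "(v,(i,j')) \<in> En n" "1 \<le> i" "2 \<le> j'" shows "v = (i, j' - 1)"
  using assms unfolding En_iff by (auto simp: base_def split: if_splits)

lemma E5: assumes "(base,w) \<in> En n"
  shows "w = base \<or> (\<exists>i. 1 \<le> i \<and> i \<le> n \<and> w = (i,1) \<and> 1 < lens n!(i-1))"
  using assms unfolding En_iff by (auto simp: base_def split: if_splits)

definition cw :: "(vert \<times> vert) set \<Rightarrow> vert list \<Rightarrow> bool" where
  "cw E b \<longleftrightarrow> (b \<noteq> [] \<longrightarrow> hd b = base) \<and> successively (\<lambda>a c. (a,c) \<in> E) (b @ [base])"

lemma cw_Nil: "cw E []" by (simp add: cw_def)

lemma cw_append: assumes "cw E a" "cw E b" shows "cw E (a @ b)"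
proof (cases "a = [] \<or> b = []")
  case True then show ?thesis using assms by auto
next
  case False
  then show ?thesis using assms unfolding cw_def
    by (auto simp: successively_append_iff)
qed

lemma cw_concat: "(\<And>b. b \<in> set bs \<Longrightarrow> cw E b) \<Longrightarrow> cw E (concat bs)"
  by (induct bs) (auto simp: cw_Nil cw_append)

lemma cw_rep: "cw E c \<Longrightarrow> cw E (rep a c)"
  unfolding rep_def by (rule cw_concat) auto

lemma loop_En: "(base, base) \<in> En n" by (simp add: En_def)

lemma cw_loopc: "cw (En n) loopc"
  by (simp add: cw_def loopc_def loop_En)

lemma cw_cyc: "1 \<le> i \<Longrightarrow> i \<le> n \<Longrightarrow> cw (En n) (cyc (lens n) i)"
proof -
  assume i: "1 \<le> i" "i \<le> n"
  have "path_edges (cyc (lens n) i @ [base]) \<subseteq> En n" using i unfolding En_def by auto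
  then show ?thesis unfolding cw_def pe_succ by (simp add: cyc_def)
qed

lemma cw_paths: assumes "P \<in> set (paths n)" shows "cw (En n) P"
proof (cases "n = 0")
  case True
  then show ?thesis using assms by (simp add: paths_def mkpaths_def cw_rep cw_loopc)
next
  case False
  have tail: "1 \<le> i \<Longrightarrow> cw (En n) (concat (map (\<lambda>m. rep 2 (cyc (lens n) m)) [i..<n + 1]))" for i
    by (rule cw_concat) (auto intro!: cw_rep cw_cyc)
  have c1: "\<And>m. 1 \<le> m \<Longrightarrow> m \<le> n \<Longrightarrow> cw (En n) (rep 2 (cyc (lens n) m))" by (intro cw_rep cw_cyc)
  show ?thesis using assms False
    by (auto simp: paths_def mkpaths_def Let_def simp del: upt_Suc intro!: cw_append cw_concat cw_loopc tail c1 cw_rep[of _ loopc])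
qed

lemma E6: assumes "(v,w) \<in> En (Suc n)" shows "(phi n v, phi n w) \<in> En n"
proof (cases "v = base \<and> w = base")
  case True then show ?thesis by (simp add: phi_def loop_En)
next
  case False
  then obtain i j where ij: "1 \<le> i" "i \<le> Suc n" "j < max 1 (lens (Suc n)!(i-1))"
     "v = (if j = 0 then base else (i,j))"
     "w = (if Suc j < lens (Suc n)!(i-1) then (i, Suc j) else base)"
    using assms unfolding En_iff by blast
  define P where "P = paths n ! (i-1)"
  have Pin: "P \<in> set (paths n)" using ij unfolding P_def by (simp add: len_paths)
  have "i - 1 \<le> n" using ij by simp
  from lens_Suc_nth[OF this] have L: "lens (Suc n)!(i-1) = length P" unfolding P_def .
  have cwP: "cw (En n) P" using cw_paths[OF Pin] .
  have nb: "\<And>k. (i,k) \<noteq> base" using ij by (simp add: base_def)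
  have pv: "phi n v = (if j = 0 then base else P ! j)" using ij nb unfolding phi_def P_def by auto
  have pw: "phi n w = (if Suc j < length P then P ! Suc j else base)" using ij nb L unfolding phi_def P_def by auto
  show ?thesis
  proof (cases "P = []")
    case True then show ?thesis using pv pw ij L by (simp add: loop_En)
  next
    case False
    have "length P \<noteq> 0" using False by simp
    then have jl: "j < length P" using ij(3) unfolding L by (simp add: max_def split: if_splits)
    have "((P @ [base]) ! j, (P @ [base]) ! Suc j) \<in> En n"
      using cwP jl unfolding cw_def by (intro successively_nth[where P="\<lambda>a c. (a,c) \<in> En n"]) auto
    moreover have "(P @ [base]) ! j = phi n v" using pv jl False cwP unfolding cw_def
      by (auto simp: nth_append hd_conv_nth)
    moreover have "(P @ [base]) ! Suc j = phi n w" using pw jl by (auto simp: nth_append)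
    ultimately show ?thesis by simp
  qed
qed

lemma len_rep: "length (rep a c) = a * length c"
  by (simp add: rep_def length_concat sum_list_replicate)

lemma rep_loopc: "rep a loopc = replicate a base"
  by (induct a) (auto simp: rep_def loopc_def)

lemma len_concat_ge: "x \<in> set xs \<Longrightarrow> length (f x) \<le> length (concat (map f xs))"
  by (induct xs) auto

lemma len_cyc: "ls ! (m - 1) \<le> length (cyc ls m)"
  by (simp add: cyc_def)

lemma len_mk:
  assumes n: "1 \<le> n" and ll: "length ls = n" and big: "\<forall>l\<in>set ls. n < l"
    and P: "P \<in> set (mkpaths n ls)"
  shows "Suc n < length P"
proof -
  define S where "S = sum_list ls"
  define k where "k = 2 * (1 + S)"
  define tailp where "tailp = (\<lambda>i. concat (map (\<lambda>m. rep 2 (cyc ls m)) [i..<n + 1]))"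
  define P1 where "P1 = concat (map (\<lambda>m. rep m loopc @ rep 2 (cyc ls 1)) [1..<k + 1])
                 @ loopc @ tailp 2 @ loopc"
  define Pi where "Pi = (\<lambda>i. loopc @ tailp i @ loopc)"
  define Plast where "Plast = rep ((n + 2)^2 * S) loopc"
  have mk: "mkpaths n ls = [P1] @ map Pi [2..<n + 1] @ [Plast]"
    using n unfolding mkpaths_def Let_def S_def k_def tailp_def P1_def Pi_def Plast_def by simp
  have cycbig: "\<And>m. 1 \<le> m \<Longrightarrow> m \<le> n \<Longrightarrow> Suc n \<le> length (cyc ls m)"
  proof -
    fix m assume "1 \<le> m" "m \<le> n"
    then have "ls ! (m-1) \<in> set ls" using ll by auto
    then have "n < ls ! (m-1)" using big by auto
    then show "Suc n \<le> length (cyc ls m)" using len_cyc[of ls m] by simp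
  qed
  have l0: "ls ! 0 \<in> set ls" using ll n by auto
  then have S0: "Suc n \<le> S" unfolding S_def using big member_le_sum_list[OF l0] by fastforce
  consider "P = P1" | i where "i \<in> set [2..<n+1]" "P = Pi i" | "P = Plast" using P unfolding mk by auto
  then show ?thesis
  proof cases
    case 1
    have "1 \<in> set [1..<k+1]" unfolding set_upt k_def by simp
    from len_concat_ge[OF this, of "\<lambda>m. rep m loopc @ rep 2 (cyc ls 1)"]
    have "length (rep 2 (cyc ls 1)) \<le> length P" unfolding 1 P1_def by simp
    then show ?thesis using cycbig[of 1] n by (simp add: len_rep)
  next
    case 2
    have i: "2 \<le> i" "i < n+1" using 2(1) unfolding set_upt by auto
    then have "i \<in> set [i..<n+1]" unfolding set_upt by auto
    from len_concat_ge[OF this, of "\<lambda>m. rep 2 (cyc ls m)"]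
    have "length (rep 2 (cyc ls i)) \<le> length P" unfolding 2 Pi_def tailp_def by simp
    then show ?thesis using cycbig[of i] i by (simp add: len_rep)
  next
    case 3
    have "2 * S \<le> (n + 2)^2 * S" by (rule mult_right_mono) (auto simp: power2_eq_square)
    moreover have "length P = (n + 2)^2 * S" by (simp add: 3 Plast_def len_rep loopc_def)
    ultimately show ?thesis using S0 by linarith
  qed
qed

lemma lens_big: "\<forall>l\<in>set (lens n). n < l"
proof (induct n)
  case 0 then show ?case by simp
next
  case (Suc n)
  show ?case
  proof (cases "n = 0")
    case True then show ?thesis by (simp add: mkpaths_def len_rep loopc_def)
  next
    case False
    then show ?thesis using len_mk[of n "lens n"] Suc len_lens by auto
  qed
qed

lemma mk_second:
  assumes P: "P \<in> set (mkpaths n ls)"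
  shows "(\<exists>r. P = base # base # r) \<or> (\<exists>a. P = replicate a base)"
proof (cases "n = 0")
  case True then show ?thesis using P by (auto simp: mkpaths_def rep_loopc)
next
  case n: False
  define S where "S = sum_list ls"
  define k where "k = 2 * (1 + S)"
  define tailp where "tailp = (\<lambda>i. concat (map (\<lambda>m. rep 2 (cyc ls m)) [i..<n + 1]))"
  define P1 where "P1 = concat (map (\<lambda>m. rep m loopc @ rep 2 (cyc ls 1)) [1..<k + 1])
                 @ loopc @ tailp 2 @ loopc"
  define Pi where "Pi = (\<lambda>i. loopc @ tailp i @ loopc)"
  define Plast where "Plast = rep ((n + 2)^2 * S) loopc"
  have mk: "mkpaths n ls = [P1] @ map Pi [2..<n + 1] @ [Plast]"
    using n unfolding mkpaths_def Let_def S_def k_def tailp_def P1_def Pi_def Plast_def by simp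
  have cy: "\<exists>r. rep 2 (cyc ls m) = base # r" for m by (simp add: rep_def cyc_def numeral_2_eq_2)
  consider "P = P1" | i where "i \<in> set [2..<n+1]" "P = Pi i" | "P = Plast" using P unfolding mk by auto
  then show ?thesis
  proof cases
    case 1
    have "[1..<k+1] = 1 # [Suc 1..<k+1]" by (rule upt_conv_Cons) (simp add: k_def)
    then show ?thesis using cy[of 1] unfolding 1 P1_def by (auto simp: rep_loopc)
  next
    case 2
    have i: "2 \<le> i" "i < n+1" using 2(1) unfolding set_upt by auto
    have "[i..<n+1] = i # [Suc i..<n+1]" by (rule upt_conv_Cons) (use i in simp)
    then show ?thesis using cy[of i] unfolding 2 Pi_def tailp_def by (auto simp: loopc_def)
  next
    case 3 then show ?thesis unfolding Plast_def by (simp add: rep_loopc)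
  qed
qed

lemma paths_second: "P \<in> set (paths n) \<Longrightarrow> 2 \<le> length P \<Longrightarrow> P ! 1 = base"
  using mk_second[of P n "lens n"] unfolding paths_def by auto

fun dn :: "nat \<Rightarrow> nat \<Rightarrow> vert \<Rightarrow> vert" where
  "dn 0 m v = v"
| "dn (Suc d) m v = phi m (dn d (Suc m) v)"

lemma dn_X: "x \<in> Xsp \<Longrightarrow> dn d m (x (m + d)) = x m"
proof (induct d arbitrary: m)
  case 0 then show ?case by simp
next
  case (Suc d)
  have "dn d (Suc m) (x (Suc m + d)) = x (Suc m)" using Suc by blast
  moreover have "m + Suc d = Suc m + d" by simp
  ultimately have "dn (Suc d) m (x (m + Suc d)) = phi m (x (Suc m))" by simp
  then show ?case using Suc.prems by (simp add: Xsp_def)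
qed

lemma dn_E: "(u,v) \<in> En (m + d) \<Longrightarrow> (dn d m u, dn d m v) \<in> En m"
  by (induct d arbitrary: m) (auto intro: E6)

lemma dn_base: "dn d m base = base"
  by (induct d arbitrary: m) (auto simp: phi_def)

lemma X_base_down: assumes "x \<in> Xsp" "x m = base" "n \<le> m" shows "x n = base"
  using dn_X[OF assms(1), of "m - n" n] assms(2,3) dn_base by simp

lemma pt_X: "pt \<in> Xsp"
  by (simp add: Xsp_def pt_def Vn_def phi_def)

lemma nonpt: assumes "x \<in> Xsp" "x \<noteq> pt"
  obtains N where "\<And>m. N \<le> m \<Longrightarrow> x m \<noteq> base"
proof -
  obtain N where "x N \<noteq> base" using assms(2) unfolding pt_def by auto
  then have "\<And>m. N \<le> m \<Longrightarrow> x m \<noteq> base" using X_base_down[OF assms(1)] by blast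
  then show ?thesis using that by blast
qed

lemma unique_pt: assumes "y \<in> Xsp" "\<And>n. (base, y n) \<in> En n" shows "y = pt"
proof
  fix n
  have yn: "y n = phi n (y (Suc n))" using assms(1) by (simp add: Xsp_def)
  from E5[OF assms(2)[of "Suc n"]]
  show "y n = pt n"
  proof
    assume "y (Suc n) = base" then show ?thesis using yn by (simp add: phi_def pt_def)
  next
    assume "\<exists>i. 1 \<le> i \<and> i \<le> Suc n \<and> y (Suc n) = (i,1) \<and> 1 < lens (Suc n)!(i-1)"
    then obtain i where i: "1 \<le> i" "i \<le> Suc n" "y (Suc n) = (i,1)" "1 < lens (Suc n)!(i-1)" by blast
    have "i - 1 \<le> n" using i by simp
    from lens_Suc_nth[OF this] i(4) have "2 \<le> length (paths n ! (i-1))" by simp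
    moreover have "paths n ! (i-1) \<in> set (paths n)" using i by (simp add: len_paths)
    ultimately have "paths n ! (i-1) ! 1 = base" using paths_second by blast
    then show ?thesis using yn i by (simp add: phi_def pt_def base_def)
  qed
qed

lemma succ_unique: assumes "x \<in> Xsp" "y \<in> Xsp" "y' \<in> Xsp"
  "\<And>n. (x n, y n) \<in> En n" "\<And>n. (x n, y' n) \<in> En n" shows "y = y'"
proof (cases "x = pt")
  case True
  have b: "\<And>n. x n = base" using True by (simp add: pt_def)
  have "y = pt" by (rule unique_pt[OF assms(2)]) (metis assms(4) b)
  moreover have "y' = pt" by (rule unique_pt[OF assms(3)]) (metis assms(5) b)
  ultimately show ?thesis by simp
next
  case False
  then obtain N where N: "\<And>m. N \<le> m \<Longrightarrow> x m \<noteq> base" using nonpt assms(1) by blast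
  have hi: "y m = y' m" if "N \<le> m" for m
    using E1[OF assms(4)[of m] N[OF that]] E1[OF assms(5)[of m] N[OF that]] by auto
  show ?thesis
  proof
    fix n
    define m where "m = max n N"
    have "y n = dn (m - n) n (y (n + (m - n)))" using dn_X[OF assms(2)] by simp
    also have "\<dots> = dn (m - n) n (y' (n + (m - n)))" using hi[of "n + (m-n)"] unfolding m_def by simp
    also have "\<dots> = y' n" using dn_X[OF assms(3)] by simp
    finally show "y n = y' n" .
  qed
qed

lemma succ_exists: assumes "x \<in> Xsp" shows "\<exists>y. y \<in> Xsp \<and> (\<forall>n. (x n, y n) \<in> En n)"
proof (cases "x = pt")
  case True then show ?thesis using pt_X loop_En by (auto simp: pt_def)
next
  case False
  then obtain N where N: "\<And>m. N \<le> m \<Longrightarrow> x m \<noteq> base" using nonpt assms(1) by blast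
  have xV: "\<And>m. x m \<in> Vn m" using assms by (simp add: Xsp_def)
  have xe: "\<And>m. N \<le> m \<Longrightarrow> (x m, nxt m (x m)) \<in> En m" using E2 xV N by blast
  define y where "y n = (if n < N then dn (N - n) n (nxt N (x N)) else nxt n (x n))" for n
  have edge: "(x n, y n) \<in> En n" for n
  proof (cases "n < N")
    case True
    have "(x (n + (N - n)), nxt N (x N)) \<in> En (n + (N - n))" using xe[of N] True by simp
    from dn_E[OF this] show ?thesis using True dn_X[OF assms, of "N - n" n] unfolding y_def by simp
  next
    case False then show ?thesis using xe unfolding y_def by simp
  qed
  have phiy: "phi n (y (Suc n)) = y n" for n
  proof (cases "N \<le> n")
    case True
    have "(phi n (x (Suc n)), phi n (y (Suc n))) \<in> En n" using E6 edge by blast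
    then have "(x n, phi n (y (Suc n))) \<in> En n" using assms by (simp add: Xsp_def)
    from E1[OF this N[OF True]] have "phi n (y (Suc n)) = nxt n (x n)" by auto
    then show ?thesis using True unfolding y_def by simp
  next
    case False
    show ?thesis
    proof (cases "Suc n = N")
      case True then show ?thesis unfolding y_def by auto
    next
      case False
      then have "N - n = Suc (N - Suc n)" "Suc n < N" using \<open>\<not> N \<le> n\<close> by auto
      then show ?thesis unfolding y_def by simp
    qed
  qed
  have "y \<in> Xsp" unfolding Xsp_def using E3[OF edge] phiy by auto
  then show ?thesis using edge by blast
qed

lemma T_spec: assumes "x \<in> Xsp" shows "Tmap x \<in> Xsp \<and> (\<forall>n. (x n, Tmap x n) \<in> En n)"
proof -
  have "\<exists>!y. y \<in> Xsp \<and> (\<forall>n. (x n, y n) \<in> En n)"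
    using succ_exists[OF assms] succ_unique[OF assms] by blast
  then show ?thesis unfolding Tmap_def by (rule theI')
qed

lemma periodic_pt: assumes "periodic_point x" shows "x = pt"
proof (rule ccontr)
  assume np: "x \<noteq> pt"
  from assms obtain k where X: "x \<in> Xsp" and k: "k > 0" "(Tmap ^^ k) x = x"
    unfolding periodic_point_def by blast
  define orb where "orb t = (Tmap ^^ t) x" for t
  have oX: "orb t \<in> Xsp" for t
    by (induct t) (auto simp: orb_def X T_spec)
  have oE: "(orb t n, orb (Suc t) n) \<in> En n" for t n
    using T_spec[OF oX[of t]] by (simp add: orb_def)
  have oper: "orb (t + k) = orb t" for t
    unfolding orb_def by (simp add: funpow_add k(2))
  have omul: "orb (k * c) = x" for c
  proof (induct c)
    case 0 then show ?case by (simp add: orb_def)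
  next
    case (Suc c)
    have "k * Suc c = k * c + k" by simp
    then show ?case using oper[of "k*c"] Suc by (simp only:)
  qed
  obtain N where N: "\<And>m. N \<le> m \<Longrightarrow> x m \<noteq> base" using nonpt[OF X np] by blast
  define n where "n = max N (k + 1)"
  have xn: "x n \<noteq> base" "x n \<in> Vn n" using N X unfolding n_def Xsp_def by auto
  then obtain i j where ij: "x n = (i,j)" "1 \<le> i" "i \<le> n" "1 \<le> j" "j < lens n!(i-1)"
    unfolding Vn_def by auto
  define L where "L = lens n!(i-1)"
  have "lens n ! (i-1) \<in> set (lens n)" using ij len_lens[of n] by auto
  then have Lbig: "n < L" using lens_big[of n] unfolding L_def by blast
  define w where "w t = orb t n" for t
  have wE: "(w t, w (Suc t)) \<in> En n" for t unfolding w_def by (rule oE)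
  have bwd: "\<forall>t. w t = (i,q) \<longrightarrow> 1 \<le> q \<longrightarrow> q - 1 \<le> t \<longrightarrow> w (t - (q-1)) = (i,1)" for q
  proof (induct q)
    case 0 then show ?case by simp
  next
    case (Suc q)
    show ?case
    proof (intro allI impI)
      fix t assume a: "w t = (i, Suc q)" "1 \<le> Suc q" "Suc q - 1 \<le> t"
      show "w (t - (Suc q - 1)) = (i, 1)"
      proof (cases "q = 0")
        case True then show ?thesis using a by simp
      next
        case False
        have "Suc (t - 1) = t" using a False by simp
        then have "(w (t - 1), (i, Suc q)) \<in> En n" using wE[of "t - 1"] a(1) by simp
        from E4[OF this ij(2)] False have "w (t - 1) = (i, q)" by simp
        with Suc[rule_format, of "t - 1"] False a(3) have "w (t - 1 - (q - 1)) = (i,1)" by simp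
        moreover have "t - 1 - (q - 1) = t - (Suc q - 1)" using False by simp
        ultimately show ?thesis by simp
      qed
    qed
  qed
  have wkj: "w (k * j) = (i,j)" using omul[of j] ij unfolding w_def by simp
  have "j - 1 \<le> k * j" using k by (cases k) auto
  with bwd[of j] wkj ij have w1: "w (k * j - (j - 1)) = (i,1)" by blast
  define t0 where "t0 = k * j - (j - 1)"
  have fwd: "1 + s < L \<longrightarrow> w (t0 + s) = (i, 1 + s)" for s
  proof (induct s)
    case 0 then show ?case using w1 t0_def by simp
  next
    case (Suc s)
    show ?case
    proof
      assume a: "1 + Suc s < L"
      then have ws: "w (t0 + s) = (i, 1 + s)" using Suc by simp
      have "(w (t0 + s), w (t0 + Suc s)) \<in> En n" using wE[of "t0 + s"] by simp
      from E1[OF this] ws ij(2) have "w (t0 + Suc s) = nxt n (i, 1 + s)"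
        by (auto simp: base_def)
      then show "w (t0 + Suc s) = (i, 1 + Suc s)" using a by (simp add: nxt_def L_def)
    qed
  qed
  have "1 + k < L" using Lbig unfolding n_def by simp
  with fwd[of k] have "w (t0 + k) = (i, 1 + k)" by simp
  moreover have "w (t0 + k) = w t0" unfolding w_def using oper by simp
  moreover have "w t0 = (i,1)" using w1 t0_def by simp
  ultimately show False using k by simp
qed

theorem lemma3p2:
  shows "pt \<in> Xsp \<and> Tmap pt = pt \<and> (\<forall>x. periodic_point x \<longrightarrow> x = pt)"
proof (intro conjI allI impI)
  show "pt \<in> Xsp" by (rule pt_X)
  show "Tmap pt = pt"
    using T_spec[OF pt_X] unique_pt by (simp add: pt_def)
  show "x = pt" if "periodic_point x" for x using periodic_pt that .
qed

end
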